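(* Let $X_f,Y_f,Z_f\subset\mathbb{R}$, $D_f=X_f\times Y_f\times Z_f$, and let $f:D_f\to\mathbb{R}$ be a bounded function. (i) If $\mathrm{F\text{-}rank}[f]=(r_1,r_2,r_3)$ (with $r_1,r_2,r_3$ finite), then there exist a tensor $\mathcal{C}\in\mathbb{R}^{r_1\times r_2\times r_3}$ and bounded functions $f_x:X_f\to\mathbb{R}^{r_1}$, $f_y:Y_f\to\mathbb{R}^{r_2}$, $f_z:Z_f\to\mathbb{R}^{r_3}$ such that for all $(v_1,v_2,v_3)\in D_f$, $f(v_1,v_2,v_3)=\mathcal{C}\times_1 f_x(v_1)\times_2 f_y(v_2)\times_3 f_z(v_3)$. (ii) Conversely, let $\mathcal{C}\in\mathbb{R}^{r_1\times r_2\times r_3}$ be an arbitrary tensor, let $X_g,Y_g,Z_g\subset\mathbb{R}$, and let $g_x:X_g\to\mathbb{R}^{r_1}$, $g_y:Y_g\to\mathbb{R}^{r_2}$, $g_z:Z_g\to\mathbb{R}^{r_3}$ be arbitrary bounded functions. Define $g:X_g\times Y_g\times Z_g\to\mathbb{R}$ by $g(v_1,v_2,v_3)=\mathcal{C}\times_1 g_x(v_1)\times_2 g_y(v_2)\times_3 g_z(v_3)$. Then $(\mathrm{F\text{-}rank}[g])_{(i)}\le r_i$ for $i=1,2,3$.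
   Context: For $\mathcal{C}\in\mathbb{R}^{r_1\times r_2\times r_3}$ and vectors $\mathbf{a}\in\mathbb{R}^{r_1},\mathbf{b}\in\mathbb{R}^{r_2},\mathbf{c}\in\mathbb{R}^{r_3}$ (viewed as $1\times r_i$ matrices in the mode-$i$ products $\mathcal{X}\times_i\mathbf{A}:=\mathrm{fold}_i(\mathbf{A}\mathbf{X}^{(i)})$), one has $\mathcal{C}\times_1\mathbf{a}\times_2\mathbf{b}\times_3\mathbf{c}=\sum_{i,j,k}\mathcal{C}_{(i,j,k)}\mathbf{a}_{(i)}\mathbf{b}_{(j)}\mathbf{c}_{(k)}$. For a tensor $\mathcal{T}\in\mathbb{R}^{n_1\times n_2\times n_3}$, $\mathbf{T}^{(i)}$ denotes its mode-$i$ unfolding matrix (columns are the mode-$i$ fibers). For a function $h:X\times Y\times Z\to\mathbb{R}$ with $X,Y,Z\subset\mathbb{R}$, the sampled tensor set is $S[h]=\{\mathcal{T}\in\mathbb{R}^{n_1\times n_2\times n_3}: n_1,n_2,n_3\in\mathbb{N}_+,\ \exists\,\mathbf{x}\in X^{n_1},\mathbf{y}\in Y^{n_2},\mathbf{z}\in Z^{n_3}\text{ with }\mathcal{T}_{(i,j,k)}=h(\mathbf{x}_{(i)},\mathbf{y}_{(j)},\mathbf{z}_{(k)})\ \forall i,j,k\}$, and the function rank is $\mathrm{F\text{-}rank}[h]=(r_1,r_2,r_3)$ with $r_i=\sup_{\mathcal{T}\in S[h]}\mathrm{rank}(\mathbf{T}^{(i)})$; $(\mathrm{F\text{-}rank}[h])_{(i)}$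 denotes its $i$-th entry. *)

theory Defs
  imports "Jordan_Normal_Form.DL_Rank" "HOL-Library.Extended_Nat"
begin

text \<open>Third-order tensors of size n1 x n2 x n3 are represented as functions
  nat => nat => nat => real, only entries with indices below the sizes matter
  (indices are 0-based).  Vectors in R^r are functions nat => real, only
  entries with index below r matter.\<close>

definition mode_prod3 ::
  "(nat \<Rightarrow> nat \<Rightarrow> nat \<Rightarrow> real) \<Rightarrow> nat \<Rightarrow> nat \<Rightarrow> nat \<Rightarrow>
   (nat \<Rightarrow> real) \<Rightarrow> (nat \<Rightarrow> real) \<Rightarrow> (nat \<Rightarrow> real) \<Rightarrow> real" where
  "mode_prod3 C r1 r2 r3 a b c =
     (\<Sum>i<r1. \<Sum>j<r2. \<Sum>k<r3. C i j k * a i * b j * c k)"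

definition unfold1 :: "nat \<Rightarrow> nat \<Rightarrow> nat \<Rightarrow> (nat \<Rightarrow> nat \<Rightarrow> nat \<Rightarrow> real) \<Rightarrow> real mat" where
  "unfold1 n1 n2 n3 T = mat n1 (n2 * n3) (\<lambda>(i, c). T i (c mod n2) (c div n2))"

definition unfold2 :: "nat \<Rightarrow> nat \<Rightarrow> nat \<Rightarrow> (nat \<Rightarrow> nat \<Rightarrow> nat \<Rightarrow> real) \<Rightarrow> real mat" where
  "unfold2 n1 n2 n3 T = mat n2 (n1 * n3) (\<lambda>(j, c). T (c mod n1) j (c div n1))"

definition unfold3 :: "nat \<Rightarrow> nat \<Rightarrow> nat \<Rightarrow> (nat \<Rightarrow> nat \<Rightarrow> nat \<Rightarrow> real) \<Rightarrow> real mat" where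
  "unfold3 n1 n2 n3 T = mat n3 (n1 * n2) (\<lambda>(k, c). T (c mod n1) (c div n1) k)"

definition mrank :: "real mat \<Rightarrow> nat" where
  "mrank A = vec_space.rank (dim_row A) A"

definition sampled_tensors ::
  "(real \<Rightarrow> real \<Rightarrow> real \<Rightarrow> real) \<Rightarrow> real set \<Rightarrow> real set \<Rightarrow> real set \<Rightarrow>
   (nat \<times> nat \<times> nat \<times> (nat \<Rightarrow> nat \<Rightarrow> nat \<Rightarrow> real)) set" where
  "sampled_tensors h X Y Z =
     {(n1, n2, n3, T). n1 > 0 \<and> n2 > 0 \<and> n3 > 0 \<and>
        (\<exists>x y z. (\<forall>i<n1. x i \<in> X) \<and> (\<forall>j<n2. y j \<in> Y) \<and> (\<forall>k<n3. z k \<in> Z) \<and>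
                 T = (\<lambda>i j k. h (x i) (y j) (z k)))}"

definition Frank ::
  "(real \<Rightarrow> real \<Rightarrow> real \<Rightarrow> real) \<Rightarrow> real set \<Rightarrow> real set \<Rightarrow> real set \<Rightarrow>
   enat \<times> enat \<times> enat" where
  "Frank h X Y Z =
    ((SUP (n1, n2, n3, T) \<in> sampled_tensors h X Y Z. enat (mrank (unfold1 n1 n2 n3 T))),
     (SUP (n1, n2, n3, T) \<in> sampled_tensors h X Y Z. enat (mrank (unfold2 n1 n2 n3 T))),
     (SUP (n1, n2, n3, T) \<in> sampled_tensors h X Y Z. enat (mrank (unfold3 n1 n2 n3 T))))"

definition bounded_fun3 ::
  "(real \<Rightarrow> real \<Rightarrow> real \<Rightarrow> real) \<Rightarrow> real set \<Rightarrow> real set \<Rightarrow> real set \<Rightarrow> bool" where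
  "bounded_fun3 f X Y Z = (\<exists>B. \<forall>v1\<in>X. \<forall>v2\<in>Y. \<forall>v3\<in>Z. \<bar>f v1 v2 v3\<bar> \<le> B)"

definition bounded_vec_fun :: "nat \<Rightarrow> real set \<Rightarrow> (real \<Rightarrow> nat \<Rightarrow> real) \<Rightarrow> bool" where
  "bounded_vec_fun r X g = (\<exists>B. \<forall>v\<in>X. \<forall>i<r. \<bar>g v i\<bar> \<le> B)"

end

theory Submission
  imports Defs
begin

lemma (in vec_space) rank_le_span_card:
  assumes A: "A \<in> carrier_mat n m" and U: "finite U" "U \<subseteq> carrier_vec n"
    and sub: "set (cols A) \<subseteq> span U"
  shows "rank A \<le> card U"
proof -
  obtain S where S: "maximal S (\<lambda>T. T \<subseteq> set (cols A) \<and> lin_indpt T)"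
    using maximal_exists[of "(\<lambda>T. T \<subseteq> set (cols A) \<and> lin_indpt T)" "card (set (cols A))" "{}"]
    by (meson List.finite_set card_mono empty_iff empty_subsetI finite_lin_indpt2 rev_finite_subset)
  have r: "rank A = card S" using rank_card_indpt[OF A S] .
  have SS: "S \<subseteq> set (cols A)" "lin_indpt S" using S unfolding maximal_def by auto
  have fS: "finite S" using SS(1) finite_subset by blast
  have "S \<subseteq> span U" using SS(1) sub by blast
  from replacement[OF fS U(1) U(2) SS(2) this]
  show ?thesis using r by linarith
qed

lemma (in vec_space) rank_mono_cols:
  assumes A: "A \<in> carrier_mat n m" and B: "B \<in> carrier_mat n m'"
    and sub: "set (cols A) \<subseteq> set (cols B)"
  shows "rank A \<le> rank B"
proof -
  obtain S where S: "maximal S (\<lambda>T. T \<subseteq> set (cols A) \<and> lin_indpt T)"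
    using maximal_exists[of "(\<lambda>T. T \<subseteq> set (cols A) \<and> lin_indpt T)" "card (set (cols A))" "{}"]
    by (meson List.finite_set card_mono empty_iff empty_subsetI finite_lin_indpt2 rev_finite_subset)
  have r: "rank A = card S" using rank_card_indpt[OF A S] .
  have SS: "S \<subseteq> set (cols A)" "lin_indpt S" using S unfolding maximal_def by auto
  show ?thesis using rank_ge_card_indpt[OF B _ SS(2)] SS(1) sub r by auto
qed

lemma (in vec_space) rank_le_nr:
  assumes A: "A \<in> carrier_mat n m"
  shows "rank A \<le> n"
proof -
  obtain S where S: "maximal S (\<lambda>T. T \<subseteq> set (cols A) \<and> lin_indpt T)"
    using maximal_exists[of "(\<lambda>T. T \<subseteq> set (cols A) \<and> lin_indpt T)" "card (set (cols A))" "{}"]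
    by (meson List.finite_set card_mono empty_iff empty_subsetI finite_lin_indpt2 rev_finite_subset)
  have r: "rank A = card S" using rank_card_indpt[OF A S] .
  have SS: "S \<subseteq> set (cols A)" "lin_indpt S" using S unfolding maximal_def by auto
  have "S \<subseteq> carrier_vec n" using SS(1) A cols_dim by blast
  then show ?thesis using li_le_dim(2)[OF fin_dim _ SS(2)] dim_is_n r by simp
qed

lemma (in vec_space) span_sum_vec:
  fixes r :: nat
  assumes U: "U \<subseteq> carrier_vec n" and g: "\<forall>a<r. g a \<in> U"
  shows "vec n (\<lambda>i. \<Sum>a<r. c a * g a $ i) \<in> span U"
  using g
proof (induction r)
  case 0
  have "vec n (\<lambda>i. \<Sum>a<0. c a * g a $ i) = 0\<^sub>v n" by auto
  moreover have "0\<^sub>v n \<in> span U" by (rule in_spanI[where A="{}"]) (auto simp: lincomb_def)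
  ultimately show ?case by simp
next
  case (Suc r)
  have gr: "g r \<in> carrier_vec n" using Suc.prems U by auto
  have e: "vec n (\<lambda>i. \<Sum>a<Suc r. c a * g a $ i) = vec n (\<lambda>i. \<Sum>a<r. c a * g a $ i) + c r \<cdot>\<^sub>v g r"
    using gr by (auto simp: eq_vecI)
  have "g r \<in> span U" using Suc.prems U by (intro span_mem) auto
  then have "c r \<cdot>\<^sub>v g r \<in> span U" using smult_in_span[OF U] by auto
  moreover have "vec n (\<lambda>i. \<Sum>a<r. c a * g a $ i) \<in> span U" using Suc by auto
  ultimately show ?case unfolding e using span_add1[OF U] by auto
qed

lemma (in vec_space) rank_sum_le:
  assumes "A = mat n m (\<lambda>(i,j). \<Sum>a<r. u i a * k j a)"
  shows "rank A \<le> r"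
proof -
  let ?g = "\<lambda>a. vec n (\<lambda>i. u i a)"
  let ?U = "?g ` {..<r}"
  have U: "finite ?U" "?U \<subseteq> carrier_vec n" by auto
  have A: "A \<in> carrier_mat n m" using assms by auto
  have "set (cols A) \<subseteq> span ?U"
  proof
    fix v assume "v \<in> set (cols A)"
    then obtain j where j: "j < m" "v = col A j" using A by (auto simp: in_set_conv_nth)
    have "v = vec n (\<lambda>i. \<Sum>a<r. k j a * ?g a $ i)" using j assms
      by (auto intro!: eq_vecI sum.cong simp: mult.commute)
    also have "\<dots> \<in> span ?U" by (rule span_sum_vec) auto
    finally show "v \<in> span ?U" .
  qed
  from rank_le_span_card[OF A U this] show ?thesis
    using card_image_le[of "{..<r}" ?g] by simp
qed

lemma (in vec_space) indpt_inj:
  assumes P: "P \<in> carrier_mat n r" and d: "distinct (cols P)" and li: "lin_indpt (set (cols P))"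
    and c: "c \<in> carrier_vec r" and z: "P *\<^sub>v c = 0\<^sub>v n"
  shows "c = 0\<^sub>v r"
  using lin_depI[OF P c _ z d] li by blast

lemma (in vec_space) inj_indpt:
  assumes P: "P \<in> carrier_mat n r" and d: "distinct (cols P)"
    and inj: "\<And>c. c \<in> carrier_vec r \<Longrightarrow> P *\<^sub>v c = 0\<^sub>v n \<Longrightarrow> c = 0\<^sub>v r"
  shows "lin_indpt (set (cols P))"
proof
  assume "lin_dep (set (cols P))"
  from lin_depE[OF P this d] obtain v where "v \<in> carrier_vec r" "v \<noteq> 0\<^sub>v r" "P *\<^sub>v v = 0\<^sub>v n" .
  with inj show False by blast
qed

lemma self_scalar_zero:
  fixes y :: "real vec"
  assumes "y \<in> carrier_vec n" "y \<bullet> y = 0"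
  shows "y = 0\<^sub>v n"
proof -
  have "(\<Sum>i\<in>{0..<n}. y $ i * y $ i) = 0" using assms unfolding scalar_prod_def by simp
  then have "\<forall>i\<in>{0..<n}. y $ i * y $ i = 0" by (subst sum_nonneg_eq_0_iff[symmetric]) auto
  then show ?thesis using assms(1) by (intro eq_vecI) auto
qed

lemma left_inverse_exists:
  fixes P :: "real mat"
  assumes P: "P \<in> carrier_mat n r"
    and inj: "\<And>c. c \<in> carrier_vec r \<Longrightarrow> P *\<^sub>v c = 0\<^sub>v n \<Longrightarrow> c = 0\<^sub>v r"
  shows "\<exists>L. L \<in> carrier_mat r n \<and> L * P = 1\<^sub>m r"
proof -
  let ?G = "transpose_mat P * P"
  have G: "?G \<in> carrier_mat r r" using P by auto
  have "det ?G \<noteq> 0"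
  proof
    assume "det ?G = 0"
    then obtain c where c: "c \<in> carrier_vec r" "c \<noteq> 0\<^sub>v r" "?G *\<^sub>v c = 0\<^sub>v r"
      using det_0_iff_vec_prod_zero_field[OF G] by blast
    let ?y = "P *\<^sub>v c"
    have y: "?y \<in> carrier_vec n" using P c by auto
    have "transpose_mat P *\<^sub>v ?y = 0\<^sub>v r" using c P by (metis assoc_mult_mat_vec transpose_carrier_mat)
    then have "(transpose_mat P *\<^sub>v ?y) \<bullet> c = 0" using c by simp
    then have "?y \<bullet> ?y = 0" using transpose_vec_mult_scalar[OF P c(1) y] by simp
    then have "?y = 0\<^sub>v n" using self_scalar_zero y by blast
    then show False using inj c by blast
  qed
  define L where "L = (1 / det ?G) \<cdot>\<^sub>m (adj_mat ?G * transpose_mat P)"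
  have L: "L \<in> carrier_mat r n" unfolding L_def using adj_mat(1)[OF G] P by auto
  have "L * P = (1 / det ?G) \<cdot>\<^sub>m ((adj_mat ?G * transpose_mat P) * P)"
    unfolding L_def using adj_mat(1)[OF G] P by (intro mult_smult_assoc_mat) auto
  also have "(adj_mat ?G * transpose_mat P) * P = adj_mat ?G * ?G"
    using adj_mat(1)[OF G] P by (metis assoc_mult_mat transpose_carrier_mat)
  also have "\<dots> = det ?G \<cdot>\<^sub>m 1\<^sub>m r" using adj_mat(3)[OF G] .
  also have "(1 / det ?G) \<cdot>\<^sub>m (det ?G \<cdot>\<^sub>m 1\<^sub>m r) = 1\<^sub>m r"
    using \<open>det ?G \<noteq> 0\<close> by (intro eq_matI) auto
  finally show ?thesis using L by blast
qed

lemma (in vec_space) last_col_in_span: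
  assumes B: "B \<in> carrier_mat n (Suc r)" and rk: "rank B \<le> r"
    and B'def: "B' = mat n r (\<lambda>(i,a). B $$ (i,a))"
    and d: "distinct (cols B')" and li: "lin_indpt (set (cols B'))"
  shows "\<exists>c. c \<in> carrier_vec r \<and> col B r = B' *\<^sub>v c"
proof -
  have B': "B' \<in> carrier_mat n r" using B'def by auto
  have colsB': "set (cols B') \<subseteq> set (cols B)"
  proof
    fix v assume "v \<in> set (cols B')"
    then obtain a where a: "a < r" "v = col B' a" using B' by (auto simp: in_set_conv_nth)
    have "v = col B a" using a B B'def by (auto intro!: eq_vecI)
    then show "v \<in> set (cols B)" using a B by (auto simp: in_set_conv_nth intro!: exI[of _ a])
  qed
  have bw: "col B r \<in> set (cols B)" using B by (auto simp: in_set_conv_nth intro!: exI[of _ r])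
  have cB': "set (cols B') \<subseteq> carrier_vec n" using B' cols_dim by blast
  have bwc: "col B r \<in> carrier_vec n" using B by auto
  have insp: "col B r \<in> span (set (cols B'))"
  proof (rule ccontr)
    assume nsp: "col B r \<notin> span (set (cols B'))"
    then have nin: "col B r \<notin> set (cols B')" using span_mem[OF cB'] by blast
    have "\<not> lin_dep (set (cols B') \<union> {col B r})"
      using lin_dep_iff_in_span[OF cB' li bwc nin] nsp by blast
    then have "card (set (cols B') \<union> {col B r}) \<le> rank B"
      using rank_ge_card_indpt[OF B, of "set (cols B') \<union> {col B r}"] colsB' bw by blast
    moreover have "card (set (cols B') \<union> {col B r}) = Suc r"
      using nin d B' distinct_card[OF d] by simp
    ultimately show False using rk by simp
  qed
  then have "col B r \<in> span_list (cols B')" using span_list_as_span[OF cB'] by simp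
  then obtain c where "col B r = lincomb_list c (cols B')"
    unfolding span_list_def by blast
  also have "\<dots> = mat_of_cols n (cols B') *\<^sub>v vec (length (cols B')) c"
    using cB' by (intro lincomb_list_as_mat_mult) auto
  also have "mat_of_cols n (cols B') = B'" using B' mat_of_cols_cols[of B'] by simp
  finally show ?thesis using B' by (intro exI[of _ "vec r c"]) auto
qed

lemma decomp_mode:
  fixes F :: "'a \<Rightarrow> 'b \<Rightarrow> real" and R :: nat and X :: "'a set" and W :: "'b set"
  assumes H: "\<And>n m xs ws. (\<forall>i<n. xs i \<in> X) \<Longrightarrow> (\<forall>j<m. ws j \<in> W) \<Longrightarrow>
     vec_space.rank n (mat n m (\<lambda>(i,j). F (xs i) (ws j))) \<le> R"
  shows "\<exists>r p (n::nat) xs L. r \<le> R \<and> (\<forall>a<r. p a \<in> W) \<and> (\<forall>i<n. xs i \<in> X) \<and>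
     (\<forall>v\<in>X. \<forall>w\<in>W. F v w = (\<Sum>a<r. F v (p a) * (\<Sum>i<n. L a i * F (xs i) w)))"
proof -
  define valid where "valid n m xs ws \<longleftrightarrow> (\<forall>i<(n::nat). xs i \<in> X) \<and> (\<forall>j<(m::nat). ws j \<in> W)" for n m xs ws
  define rk where "rk n m xs ws = vec_space.rank n (mat n m (\<lambda>(i,j). F (xs i) (ws j)))" for n m xs ws
  define K where "K = {k. \<exists>n m xs ws. valid n m xs ws \<and> k = rk n m xs ws}"
  have KR: "K \<subseteq> {..R}" using H unfolding K_def valid_def rk_def by auto
  have finK: "finite K" using KR finite_subset by blast
  have "valid 0 0 (\<lambda>_. undefined) (\<lambda>_. undefined)" unfolding valid_def by auto
  then have Kne: "K \<noteq> {}" unfolding K_def by blast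
  define r where "r = Max K"
  have "r \<in> K" unfolding r_def using Max_in[OF finK Kne] .
  then obtain n m xs ws where vA: "valid n m xs ws" and rA: "rk n m xs ws = r"
    unfolding K_def by auto
  have maxr: "\<And>n m xs ws. valid n m xs ws \<Longrightarrow> rk n m xs ws \<le> r"
    unfolding r_def using finK by (intro Max_ge) (auto simp: K_def)
  have rR: "r \<le> R" using \<open>r \<in> K\<close> KR by auto
  define A where "A = mat n m (\<lambda>(i,j). F (xs i) (ws j))"
  have A: "A \<in> carrier_mat n m" unfolding A_def by auto
  interpret V: vec_space "TYPE(real)" n .
  obtain S where S: "maximal S (\<lambda>T. T \<subseteq> set (cols A) \<and> V.lin_indpt T)"
    using maximal_exists[of "(\<lambda>T. T \<subseteq> set (cols A) \<and> V.lin_indpt T)" "card (set (cols A))" "{}"]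
    by (meson List.finite_set card_mono empty_iff empty_subsetI V.finite_lin_indpt2 rev_finite_subset)
  have "V.rank A = card S" using V.rank_card_indpt[OF A S] .
  then have cardS: "card S = r" using rA unfolding rk_def A_def by simp
  have SS: "S \<subseteq> set (cols A)" "V.lin_indpt S" using S unfolding maximal_def by auto
  have finS: "finite S" using SS(1) finite_subset by blast
  obtain e where e: "bij_betw e {0..<r} S" using ex_bij_betw_nat_finite[OF finS] cardS by auto
  define jj where "jj a = (SOME j. j < m \<and> e a = col A j)" for a
  have jj: "jj a < m \<and> e a = col A (jj a)" if a: "a < r" for a
  proof -
    have "e a \<in> set (cols A)" using e a SS(1) bij_betwE by fastforce
    then have "\<exists>j. j < m \<and> e a = col A j" using A by (auto simp: in_set_conv_nth)
    then show ?thesis unfolding jj_def by (rule someI_ex)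
  qed
  define p where "p a = ws (jj a)" for a
  have pW: "\<forall>a<r. p a \<in> W" using jj vA unfolding valid_def p_def by auto
  have xsX: "\<forall>i<n. xs i \<in> X" using vA unfolding valid_def by auto
  define P where "P = mat n r (\<lambda>(i,a). F (xs i) (p a))"
  have P: "P \<in> carrier_mat n r" unfolding P_def by auto
  have colP: "col P a = e a" if a: "a < r" for a
  proof -
    have "e a = col A (jj a)" using jj a by auto
    also have "\<dots> = col P a" using jj[OF a] a unfolding A_def P_def p_def by (auto intro!: eq_vecI)
    finally show ?thesis by simp
  qed
  have colsP: "cols P = map e [0..<r]"
    using P colP by (intro nth_equalityI) auto
  have inje: "inj_on e {0..<r}" using e bij_betw_def by blast
  have dP: "distinct (cols P)" unfolding colsP using inje by (simp add: distinct_map)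
  have sP: "set (cols P) = S" unfolding colsP using e by (simp add: bij_betw_def)
  have Pinj: "\<And>c. c \<in> carrier_vec r \<Longrightarrow> P *\<^sub>v c = 0\<^sub>v n \<Longrightarrow> c = 0\<^sub>v r"
    using V.indpt_inj[OF P dP] SS(2) sP by blast
  obtain Lm where Lm: "Lm \<in> carrier_mat r n" "Lm * P = 1\<^sub>m r"
    using left_inverse_exists[OF P Pinj] by blast
  have main: "F v w = (\<Sum>a<r. F v (p a) * (\<Sum>i<n. Lm $$ (a,i) * F (xs i) w))"
    if v: "v \<in> X" and w: "w \<in> W" for v w
  proof -
    define xs' where "xs' i = (if i < n then xs i else v)" for i
    define ws' where "ws' a = (if a < r then p a else w)" for a
    define B where "B = mat (Suc n) (Suc r) (\<lambda>(i,j). F (xs' i) (ws' j))"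
    have B: "B \<in> carrier_mat (Suc n) (Suc r)" unfolding B_def by auto
    have "valid (Suc n) (Suc r) xs' ws'"
      unfolding valid_def xs'_def ws'_def using xsX pW v w by auto
    then have rkB: "vec_space.rank (Suc n) B \<le> r" using maxr unfolding rk_def B_def by fastforce
    define B' where "B' = mat (Suc n) r (\<lambda>(i,a). B $$ (i,a))"
    have B': "B' \<in> carrier_mat (Suc n) r" unfolding B'_def by auto
    have B'e: "B' $$ (i,a) = F (xs' i) (p a)" if "i < Suc n" "a < r" for i a
      using that unfolding B'_def B_def ws'_def by auto
    have B'P: "B' $$ (i,a) = P $$ (i,a)" if "i < n" "a < r" for i a
      using that B'e unfolding P_def xs'_def by auto
    have B'inj: "c = 0\<^sub>v r" if c: "c \<in> carrier_vec r" and z: "B' *\<^sub>v c = 0\<^sub>v (Suc n)" for c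
    proof -
      have "P *\<^sub>v c = 0\<^sub>v n"
      proof (rule eq_vecI)
        fix i assume "i < dim_vec (0\<^sub>v n :: real vec)"
        then have i: "i < n" by simp
        have "(P *\<^sub>v c) $ i = row P i \<bullet> c" using P i by simp
        also have "row P i = row B' i" using P B' i B'P by (intro eq_vecI) auto
        also have "row B' i \<bullet> c = (B' *\<^sub>v c) $ i" using B' i by simp
        also have "\<dots> = 0" using z i by simp
        finally show "(P *\<^sub>v c) $ i = (0\<^sub>v n :: real vec) $ i" using i by simp
      qed (use P in simp)
      then show ?thesis using Pinj c by blast
    qed
    have dB': "distinct (cols B')"
    proof -
      have "a = b" if ab: "a < r" "b < r" "cols B' ! a = cols B' ! b" for a b
      proof -
        have "col B' a = col B' b" using ab B' by simp
        have "col P a = col P b"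
        proof (rule eq_vecI)
          fix i assume "i < dim_vec (col P b)"
          then have i: "i < n" using P by simp
          have "col P a $ i = B' $$ (i,a)" using P i ab B'P by simp
          also have "\<dots> = col B' a $ i" using B' i ab(1,2) by simp
          also have "\<dots> = col B' b $ i" by (metis \<open>col B' a = col B' b\<close>)
          also have "\<dots> = col P b $ i" using B' P i ab(1,2) B'P by simp
          finally show "col P a $ i = col P b $ i" .
        qed (use P in simp)
        then have "cols P ! a = cols P ! b" using P ab by simp
        then show ?thesis using nth_eq_iff_index_eq[OF dP, of a b] P ab(1,2) by auto
      qed
      then show ?thesis using B' by (auto simp: distinct_conv_nth)
    qed
    interpret V1: vec_space "TYPE(real)" "Suc n" .
    have liB': "V1.lin_indpt (set (cols B'))" using V1.inj_indpt[OF B' dB'] B'inj by blast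
    obtain c where c: "c \<in> carrier_vec r" "col B r = B' *\<^sub>v c"
      using V1.last_col_in_span[OF B rkB B'_def dB' liB'] by blast
    have ent: "F (xs' i) w = (\<Sum>a<r. F (xs' i) (p a) * c $ a)" if i: "i < Suc n" for i
    proof -
      have "F (xs' i) w = col B r $ i" using i unfolding B_def ws'_def by simp
      also have "\<dots> = (B' *\<^sub>v c) $ i" using c by simp
      also have "\<dots> = row B' i \<bullet> c" using B' i by simp
      also have "\<dots> = (\<Sum>a<r. F (xs' i) (p a) * c $ a)"
        unfolding scalar_prod_def using c B' i B'e by (auto simp: lessThan_atLeast0 intro!: sum.cong)
      finally show ?thesis .
    qed
    define colw where "colw = vec n (\<lambda>i. F (xs i) w)"
    have colw: "colw = P *\<^sub>v c"
    proof (rule eq_vecI)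
      fix i assume "i < dim_vec (P *\<^sub>v c)"
      then have i: "i < n" using P by simp
      have "colw $ i = F (xs' i) w" unfolding colw_def xs'_def using i by simp
      also have "\<dots> = (\<Sum>a<r. F (xs' i) (p a) * c $ a)" using ent i by simp
      also have "\<dots> = (P *\<^sub>v c) $ i"
        using P i c unfolding P_def xs'_def by (auto simp: scalar_prod_def lessThan_atLeast0 intro!: sum.cong)
      finally show "colw $ i = (P *\<^sub>v c) $ i" .
    qed (use P colw_def in simp)
    have "Lm *\<^sub>v colw = (Lm * P) *\<^sub>v c" unfolding colw by (rule assoc_mult_mat_vec[OF Lm(1) P c(1), symmetric])
    also have "\<dots> = c" using Lm c by simp
    finally have cL: "c $ a = (\<Sum>i<n. Lm $$ (a,i) * F (xs i) w)" if a: "a < r" for a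
      using a Lm unfolding colw_def by (auto simp: scalar_prod_def lessThan_atLeast0 intro!: sum.cong)
    have "F v w = F (xs' n) w" unfolding xs'_def by simp
    also have "\<dots> = (\<Sum>a<r. F (xs' n) (p a) * c $ a)" using ent by simp
    also have "\<dots> = (\<Sum>a<r. F v (p a) * (\<Sum>i<n. Lm $$ (a,i) * F (xs i) w))"
      unfolding xs'_def using cL by (auto intro!: sum.cong)
    finally show ?thesis .
  qed
  show ?thesis
    apply (rule exI)+
    apply (intro conjI ballI)
       apply (rule rR)
      apply (rule pW)
     apply (rule xsX)
    by (rule main)
qed

lemma mp_mode1:
  "mode_prod3 C r1 r2 r3 a b c = (\<Sum>i<r1. a i * (\<Sum>j<r2. \<Sum>k<r3. C i j k * b j * c k))"
  unfolding mode_prod3_def by (simp add: sum_distrib_left mult_ac)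

lemma mp_mode2:
  "mode_prod3 C r1 r2 r3 a b c = (\<Sum>j<r2. b j * (\<Sum>i<r1. \<Sum>k<r3. C i j k * a i * c k))"
  unfolding mode_prod3_def by (subst sum.swap) (simp add: sum_distrib_left mult_ac)

lemma mp_mode3:
  "mode_prod3 C r1 r2 r3 a b c = (\<Sum>k<r3. c k * (\<Sum>i<r1. \<Sum>j<r2. C i j k * a i * b j))"
proof -
  have "mode_prod3 C r1 r2 r3 a b c = (\<Sum>i<r1. \<Sum>k<r3. \<Sum>j<r2. C i j k * a i * b j * c k)"
    unfolding mode_prod3_def by (simp add: sum.swap[of _ "{..<r2}"])
  also have "\<dots> = (\<Sum>k<r3. \<Sum>i<r1. \<Sum>j<r2. C i j k * a i * b j * c k)"
    by (rule sum.swap)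
  finally show ?thesis by (simp add: sum_distrib_left mult_ac)
qed

lemma sum_rearr:
  fixes T :: "nat \<Rightarrow> nat \<Rightarrow> nat \<Rightarrow> real"
  shows "(\<Sum>a<A. \<Sum>b<B. \<Sum>c<Cc. (\<Sum>i<I. \<Sum>j<J. \<Sum>k<K. L1 a i * L2 b j * L3 c k * T i j k) * x a * y b * z c)
   = (\<Sum>a<A. x a * (\<Sum>i<I. L1 a i * (\<Sum>b<B. y b * (\<Sum>j<J. L2 b j * (\<Sum>c<Cc. z c * (\<Sum>k<K. L3 c k * T i j k))))))"
proof -
  have "(\<Sum>a<A. \<Sum>b<B. \<Sum>c<Cc. (\<Sum>i<I. \<Sum>j<J. \<Sum>k<K. L1 a i * L2 b j * L3 c k * T i j k) * x a * y b * z c)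
     = (\<Sum>a<A. \<Sum>b<B. \<Sum>c<Cc. \<Sum>i<I. \<Sum>j<J. \<Sum>k<K. x a * L1 a i * y b * L2 b j * z c * L3 c k * T i j k)"
    by (simp add: sum_distrib_left sum_distrib_right mult_ac)
  also have "\<dots> = (\<Sum>a<A. \<Sum>b<B. \<Sum>i<I. \<Sum>c<Cc. \<Sum>j<J. \<Sum>k<K. x a * L1 a i * y b * L2 b j * z c * L3 c k * T i j k)"
    by (simp add: sum.swap[of _ "{..<Cc}" "{..<I}"])
  also have "\<dots> = (\<Sum>a<A. \<Sum>i<I. \<Sum>b<B. \<Sum>c<Cc. \<Sum>j<J. \<Sum>k<K. x a * L1 a i * y b * L2 b j * z c * L3 c k * T i j k)"
    by (simp add: sum.swap[of _ "{..<B}" "{..<I}"])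
  also have "\<dots> = (\<Sum>a<A. \<Sum>i<I. \<Sum>b<B. \<Sum>j<J. \<Sum>c<Cc. \<Sum>k<K. x a * L1 a i * y b * L2 b j * z c * L3 c k * T i j k)"
    by (simp add: sum.swap[of _ "{..<Cc}" "{..<J}"])
  also have "\<dots> = (\<Sum>a<A. x a * (\<Sum>i<I. L1 a i * (\<Sum>b<B. y b * (\<Sum>j<J. L2 b j * (\<Sum>c<Cc. z c * (\<Sum>k<K. L3 c k * T i j k))))))"
    by (simp add: sum_distrib_left mult_ac)
  finally show ?thesis .
qed

lemma cols_subset_mat:
  assumes "\<forall>j<m. \<exists>c<M. \<forall>i<n. G i j = H i c"
  shows "set (cols (mat n m (\<lambda>(i,j). G i j))) \<subseteq> set (cols (mat n M (\<lambda>(i,c). H i c)))"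
proof
  fix v assume "v \<in> set (cols (mat n m (\<lambda>(i,j). G i j)))"
  then obtain j where j: "j < m" "v = col (mat n m (\<lambda>(i,j). G i j)) j" by (auto simp: in_set_conv_nth)
  obtain c where c: "c < M" "\<forall>i<n. G i j = H i c" using assms j by blast
  have "v = col (mat n M (\<lambda>(i,c). H i c)) c" using j c by (auto intro!: eq_vecI)
  then show "v \<in> set (cols (mat n M (\<lambda>(i,c). H i c)))" using c by (auto simp: in_set_conv_nth intro!: exI[of _ c])
qed

lemma diag_idx: "j < (m::nat) \<Longrightarrow> j + m * j < m * m \<and> (j + m * j) mod m = j \<and> (j + m * j) div m = j"
proof -
  assume j: "j < m"
  have "j + m * j < m + m * j" using j by simp
  also have "\<dots> = m * (Suc j)" by simp
  also have "\<dots> \<le> m * m" using j by (intro mult_le_mono2) simp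
  finally show ?thesis using j by simp
qed

lemma rank_zero_cases:
  assumes "n = 0 \<or> m = 0"
  shows "vec_space.rank n (mat n m G) \<le> R"
proof -
  have A: "mat n m G \<in> carrier_mat n m" by simp
  show ?thesis using assms vec_space.rank_le_nr[OF A] vec_space.rank_le_nc[OF A] by auto
qed

lemma mode1_bound:
  assumes Fr: "fst (Frank f X Y Z) = enat R" and xs: "\<forall>i<n. xs i \<in> X" and ws: "\<forall>j<m. ws j \<in> Y \<times> Z"
  shows "vec_space.rank n (mat n m (\<lambda>(i,j). f (xs i) (fst (ws j)) (snd (ws j)))) \<le> R"
proof (cases "n = 0 \<or> m = 0")
  case True then show ?thesis by (rule rank_zero_cases)
next
  case False
  define T where "T = (\<lambda>i j k. f (xs i) (fst (ws j)) (snd (ws k)))"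
  have "\<exists>x y z. (\<forall>i<n. x i \<in> X) \<and> (\<forall>j<m. y j \<in> Y) \<and> (\<forall>k<m. z k \<in> Z) \<and> T = (\<lambda>i j k. f (x i) (y j) (z k))"
    unfolding T_def
    apply (rule exI[of _ "xs"], rule exI[of _ "\<lambda>j. fst (ws j)"], rule exI[of _ "\<lambda>k. snd (ws k)"])
    using xs ws by (auto simp: mem_Times_iff)
  then have mem: "(n, m, m, T) \<in> sampled_tensors f X Y Z"
    unfolding sampled_tensors_def using False by simp
  have "enat (mrank (unfold1 n m m T)) \<le> fst (Frank f X Y Z)"
    unfolding Frank_def fst_conv by (rule SUP_upper2[OF mem]) simp
  then have le: "vec_space.rank n (unfold1 n m m T) \<le> R" using Fr unfolding mrank_def unfold1_def by simp
  have "vec_space.rank n (mat n m (\<lambda>(i,j). f (xs i) (fst (ws j)) (snd (ws j)))) \<le> vec_space.rank n (unfold1 n m m T)"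
    unfolding unfold1_def
    by (rule vec_space.rank_mono_cols[OF mat_carrier mat_carrier cols_subset_mat])
       (use diag_idx T_def in metis)
  then show ?thesis using le by simp
qed

lemma mode2_bound:
  assumes Fr: "fst (snd (Frank f X Y Z)) = enat R" and ys: "\<forall>i<n. ys i \<in> Y" and ws: "\<forall>j<m. ws j \<in> X \<times> Z"
  shows "vec_space.rank n (mat n m (\<lambda>(i,j). f (fst (ws j)) (ys i) (snd (ws j)))) \<le> R"
proof (cases "n = 0 \<or> m = 0")
  case True then show ?thesis by (rule rank_zero_cases)
next
  case False
  define T where "T = (\<lambda>i j k. f (fst (ws i)) (ys j) (snd (ws k)))"
  have "\<exists>x y z. (\<forall>i<m. x i \<in> X) \<and> (\<forall>j<n. y j \<in> Y) \<and> (\<forall>k<m. z k \<in> Z) \<and> T = (\<lambda>i j k. f (x i) (y j) (z k))"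
    unfolding T_def
    apply (rule exI[of _ "\<lambda>i. fst (ws i)"], rule exI[of _ "ys"], rule exI[of _ "\<lambda>k. snd (ws k)"])
    using ys ws by (auto simp: mem_Times_iff)
  then have mem: "(m, n, m, T) \<in> sampled_tensors f X Y Z"
    unfolding sampled_tensors_def using False by simp
  have "enat (mrank (unfold2 m n m T)) \<le> fst (snd (Frank f X Y Z))"
    unfolding Frank_def fst_conv snd_conv by (rule SUP_upper2[OF mem]) simp
  then have le: "vec_space.rank n (unfold2 m n m T) \<le> R" using Fr unfolding mrank_def unfold2_def by simp
  have "vec_space.rank n (mat n m (\<lambda>(i,j). f (fst (ws j)) (ys i) (snd (ws j)))) \<le> vec_space.rank n (unfold2 m n m T)"
    unfolding unfold2_def
    by (rule vec_space.rank_mono_cols[OF mat_carrier mat_carrier cols_subset_mat])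
       (use diag_idx T_def in metis)
  then show ?thesis using le by simp
qed

lemma mode3_bound:
  assumes Fr: "snd (snd (Frank f X Y Z)) = enat R" and zs: "\<forall>i<n. zs i \<in> Z" and ws: "\<forall>j<m. ws j \<in> X \<times> Y"
  shows "vec_space.rank n (mat n m (\<lambda>(i,j). f (fst (ws j)) (snd (ws j)) (zs i))) \<le> R"
proof (cases "n = 0 \<or> m = 0")
  case True then show ?thesis by (rule rank_zero_cases)
next
  case False
  define T where "T = (\<lambda>i j k. f (fst (ws i)) (snd (ws j)) (zs k))"
  have "\<exists>x y z. (\<forall>i<m. x i \<in> X) \<and> (\<forall>j<m. y j \<in> Y) \<and> (\<forall>k<n. z k \<in> Z) \<and> T = (\<lambda>i j k. f (x i) (y j) (z k))"
    unfolding T_def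
    apply (rule exI[of _ "\<lambda>i. fst (ws i)"], rule exI[of _ "\<lambda>j. snd (ws j)"], rule exI[of _ "zs"])
    using zs ws by (auto simp: mem_Times_iff)
  then have mem: "(m, m, n, T) \<in> sampled_tensors f X Y Z"
    unfolding sampled_tensors_def using False by simp
  have "enat (mrank (unfold3 m m n T)) \<le> snd (snd (Frank f X Y Z))"
    unfolding Frank_def snd_conv by (rule SUP_upper2[OF mem]) simp
  then have le: "vec_space.rank n (unfold3 m m n T) \<le> R" using Fr unfolding mrank_def unfold3_def by simp
  have "vec_space.rank n (mat n m (\<lambda>(i,j). f (fst (ws j)) (snd (ws j)) (zs i))) \<le> vec_space.rank n (unfold3 m m n T)"
    unfolding unfold3_def
    by (rule vec_space.rank_mono_cols[OF mat_carrier mat_carrier cols_subset_mat])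
       (use diag_idx T_def in metis)
  then show ?thesis using le by simp
qed

lemma sum_shrink:
  fixes g :: "nat \<Rightarrow> real"
  assumes "s \<le> r" "\<And>a. s \<le> a \<Longrightarrow> g a = 0"
  shows "(\<Sum>a<r. g a) = (\<Sum>a<s. g a)"
  using assms by (intro sum.mono_neutral_right) auto

lemma mp_reduce:
  assumes "s1 \<le> r1" "s2 \<le> r2" "s3 \<le> r3"
    and "\<And>a. s1 \<le> a \<Longrightarrow> x a = 0" "\<And>b. s2 \<le> b \<Longrightarrow> y b = 0" "\<And>c. s3 \<le> c \<Longrightarrow> z c = 0"
  shows "mode_prod3 C r1 r2 r3 x y z = (\<Sum>a<s1. \<Sum>b<s2. \<Sum>c<s3. C a b c * x a * y b * z c)"
proof -
  have "mode_prod3 C r1 r2 r3 x y z = (\<Sum>a<r1. \<Sum>b<r2. \<Sum>c<s3. C a b c * x a * y b * z c)"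
    unfolding mode_prod3_def using assms by (intro sum.cong refl sum_shrink) auto
  also have "\<dots> = (\<Sum>a<r1. \<Sum>b<s2. \<Sum>c<s3. C a b c * x a * y b * z c)"
    using assms by (intro sum.cong refl sum_shrink) auto
  also have "\<dots> = (\<Sum>a<s1. \<Sum>b<s2. \<Sum>c<s3. C a b c * x a * y b * z c)"
    using assms by (intro sum_shrink) auto
  finally show ?thesis .
qed

lemma part1:
  fixes f :: "real \<Rightarrow> real \<Rightarrow> real \<Rightarrow> real"
  assumes bd: "bounded_fun3 f Xf Yf Zf" and Fr: "Frank f Xf Yf Zf = (enat r1, enat r2, enat r3)"
  shows "\<exists>C fx fy fz. bounded_vec_fun r1 Xf fx \<and> bounded_vec_fun r2 Yf fy \<and>
                    bounded_vec_fun r3 Zf fz \<and>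
         (\<forall>v1\<in>Xf. \<forall>v2\<in>Yf. \<forall>v3\<in>Zf.
            f v1 v2 v3 = mode_prod3 C r1 r2 r3 (fx v1) (fy v2) (fz v3))"
proof -
  have Fr1: "fst (Frank f Xf Yf Zf) = enat r1" and Fr2: "fst (snd (Frank f Xf Yf Zf)) = enat r2"
    and Fr3: "snd (snd (Frank f Xf Yf Zf)) = enat r3" using Fr by auto
  obtain s1 p1 N1 xs1 L1 where s1: "s1 \<le> r1" and p1: "\<forall>a<s1. p1 a \<in> Yf \<times> Zf"
    and xs1: "\<forall>i<(N1::nat). xs1 i \<in> Xf"
    and eq1: "\<forall>v\<in>Xf. \<forall>w\<in>Yf \<times> Zf. f v (fst w) (snd w) =
       (\<Sum>a<s1. f v (fst (p1 a)) (snd (p1 a)) * (\<Sum>i<N1. L1 a i * f (xs1 i) (fst w) (snd w)))"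
    using decomp_mode[where F="\<lambda>v w. f v (fst w) (snd w)" and X=Xf and W="Yf \<times> Zf" and R=r1, OF mode1_bound[OF Fr1]] by blast
  obtain s2 p2 N2 ys2 L2 where s2: "s2 \<le> r2" and p2: "\<forall>a<s2. p2 a \<in> Xf \<times> Zf"
    and ys2: "\<forall>i<(N2::nat). ys2 i \<in> Yf"
    and eq2: "\<forall>v\<in>Yf. \<forall>w\<in>Xf \<times> Zf. f (fst w) v (snd w) =
       (\<Sum>a<s2. f (fst (p2 a)) v (snd (p2 a)) * (\<Sum>i<N2. L2 a i * f (fst w) (ys2 i) (snd w)))"
    using decomp_mode[where F="\<lambda>v w. f (fst w) v (snd w)" and X=Yf and W="Xf \<times> Zf" and R=r2, OF mode2_bound[OF Fr2]] by blast
  obtain s3 p3 N3 zs3 L3 where s3: "s3 \<le> r3" and p3: "\<forall>a<s3. p3 a \<in> Xf \<times> Yf"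
    and zs3: "\<forall>i<(N3::nat). zs3 i \<in> Zf"
    and eq3: "\<forall>v\<in>Zf. \<forall>w\<in>Xf \<times> Yf. f (fst w) (snd w) v =
       (\<Sum>a<s3. f (fst (p3 a)) (snd (p3 a)) v * (\<Sum>i<N3. L3 a i * f (fst w) (snd w) (zs3 i)))"
    using decomp_mode[where F="\<lambda>v w. f (fst w) (snd w) v" and X=Zf and W="Xf \<times> Yf" and R=r3, OF mode3_bound[OF Fr3]] by blast
  define fx where "fx v a = (if a < s1 then f v (fst (p1 a)) (snd (p1 a)) else 0)" for v a
  define fy where "fy v b = (if b < s2 then f (fst (p2 b)) v (snd (p2 b)) else 0)" for v b
  define fz where "fz v c = (if c < s3 then f (fst (p3 c)) (snd (p3 c)) v else 0)" for v c
  define C where "C a b c = (\<Sum>i<N1. \<Sum>j<N2. \<Sum>k<N3. L1 a i * L2 b j * L3 c k * f (xs1 i) (ys2 j) (zs3 k))" for a b c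
  obtain B where B: "\<forall>v1\<in>Xf. \<forall>v2\<in>Yf. \<forall>v3\<in>Zf. \<bar>f v1 v2 v3\<bar> \<le> B"
    using bd unfolding bounded_fun3_def by blast
  have bx: "bounded_vec_fun r1 Xf fx" unfolding bounded_vec_fun_def
  proof (intro exI[of _ "\<bar>B\<bar>"] ballI allI impI)
    fix v i assume v: "v \<in> Xf" and i: "i < r1"
    show "\<bar>fx v i\<bar> \<le> \<bar>B\<bar>"
    proof (cases "i < s1")
      case True
      then have "fst (p1 i) \<in> Yf" "snd (p1 i) \<in> Zf" using p1 by (auto simp: mem_Times_iff)
      then have "\<bar>f v (fst (p1 i)) (snd (p1 i))\<bar> \<le> B" using B v by blast
      then show ?thesis using True unfolding fx_def by simp
    next
      case False
      then show ?thesis unfolding fx_def by simp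
    qed
  qed
  have by': "bounded_vec_fun r2 Yf fy" unfolding bounded_vec_fun_def
  proof (intro exI[of _ "\<bar>B\<bar>"] ballI allI impI)
    fix v i assume v: "v \<in> Yf" and i: "i < r2"
    show "\<bar>fy v i\<bar> \<le> \<bar>B\<bar>"
    proof (cases "i < s2")
      case True
      then have "fst (p2 i) \<in> Xf" "snd (p2 i) \<in> Zf" using p2 by (auto simp: mem_Times_iff)
      then have "\<bar>f (fst (p2 i)) v (snd (p2 i))\<bar> \<le> B" using B v by blast
      then show ?thesis using True unfolding fy_def by simp
    next
      case False
      then show ?thesis unfolding fy_def by simp
    qed
  qed
  have bz: "bounded_vec_fun r3 Zf fz" unfolding bounded_vec_fun_def
  proof (intro exI[of _ "\<bar>B\<bar>"] ballI allI impI)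
    fix v i assume v: "v \<in> Zf" and i: "i < r3"
    show "\<bar>fz v i\<bar> \<le> \<bar>B\<bar>"
    proof (cases "i < s3")
      case True
      then have "fst (p3 i) \<in> Xf" "snd (p3 i) \<in> Yf" using p3 by (auto simp: mem_Times_iff)
      then have "\<bar>f (fst (p3 i)) (snd (p3 i)) v\<bar> \<le> B" using B v by blast
      then show ?thesis using True unfolding fz_def by simp
    next
      case False
      then show ?thesis unfolding fz_def by simp
    qed
  qed
  have eq: "f v1 v2 v3 = mode_prod3 C r1 r2 r3 (fx v1) (fy v2) (fz v3)"
    if v: "v1 \<in> Xf" "v2 \<in> Yf" "v3 \<in> Zf" for v1 v2 v3
  proof -
    have "mode_prod3 C r1 r2 r3 (fx v1) (fy v2) (fz v3)
      = (\<Sum>a<s1. \<Sum>b<s2. \<Sum>c<s3. C a b c * fx v1 a * fy v2 b * fz v3 c)"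
      using s1 s2 s3 by (intro mp_reduce) (auto simp: fx_def fy_def fz_def)
    also have "\<dots> = (\<Sum>a<s1. fx v1 a * (\<Sum>i<N1. L1 a i * (\<Sum>b<s2. fy v2 b * (\<Sum>j<N2. L2 b j *
         (\<Sum>c<s3. fz v3 c * (\<Sum>k<N3. L3 c k * f (xs1 i) (ys2 j) (zs3 k)))))))"
      unfolding C_def by (rule sum_rearr)
    also have "\<dots> = (\<Sum>a<s1. fx v1 a * (\<Sum>i<N1. L1 a i * (\<Sum>b<s2. fy v2 b * (\<Sum>j<N2. L2 b j *
         f (xs1 i) (ys2 j) v3))))"
    proof -
      have in3: "(\<Sum>c<s3. fz v3 c * (\<Sum>k<N3. L3 c k * f (xs1 i) (ys2 j) (zs3 k))) = f (xs1 i) (ys2 j) v3"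
        if i: "i < N1" and j: "j < N2" for i j
      proof -
        have mem: "(xs1 i, ys2 j) \<in> Xf \<times> Yf" using i j xs1 ys2 by auto
        have "f (xs1 i) (ys2 j) v3 = (\<Sum>c<s3. f (fst (p3 c)) (snd (p3 c)) v3 * (\<Sum>k<N3. L3 c k * f (xs1 i) (ys2 j) (zs3 k)))"
          using eq3[rule_format, OF v(3) mem] by (simp only: fst_conv snd_conv)
        also have "\<dots> = (\<Sum>c<s3. fz v3 c * (\<Sum>k<N3. L3 c k * f (xs1 i) (ys2 j) (zs3 k)))"
          unfolding fz_def by (intro sum.cong) auto
        finally show ?thesis ..
      qed
      show ?thesis by (simp add: in3)
    qed
    also have "\<dots> = (\<Sum>a<s1. fx v1 a * (\<Sum>i<N1. L1 a i * f (xs1 i) v2 v3))"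
    proof -
      have in2: "(\<Sum>b<s2. fy v2 b * (\<Sum>j<N2. L2 b j * f (xs1 i) (ys2 j) v3)) = f (xs1 i) v2 v3"
        if i: "i < N1" for i
      proof -
        have mem: "(xs1 i, v3) \<in> Xf \<times> Zf" using i xs1 v by auto
        have "f (xs1 i) v2 v3 = (\<Sum>b<s2. f (fst (p2 b)) v2 (snd (p2 b)) * (\<Sum>j<N2. L2 b j * f (xs1 i) (ys2 j) v3))"
          using eq2[rule_format, OF v(2) mem] by (simp only: fst_conv snd_conv)
        also have "\<dots> = (\<Sum>b<s2. fy v2 b * (\<Sum>j<N2. L2 b j * f (xs1 i) (ys2 j) v3))"
          unfolding fy_def by (intro sum.cong) auto
        finally show ?thesis ..
      qed
      show ?thesis by (simp add: in2)
    qed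
    also have "\<dots> = (\<Sum>a<s1. f v1 (fst (p1 a)) (snd (p1 a)) * (\<Sum>i<N1. L1 a i * f (xs1 i) v2 v3))"
      unfolding fx_def by (intro sum.cong) auto
    also have "\<dots> = f v1 v2 v3"
    proof -
      have mem: "(v2, v3) \<in> Yf \<times> Zf" using v by auto
      show ?thesis using eq1[rule_format, OF v(1) mem] by (simp only: fst_conv snd_conv)
    qed
    finally show ?thesis ..
  qed
  show ?thesis using bx by' bz eq by blast
qed



lemma part2:
  fixes C :: "nat \<Rightarrow> nat \<Rightarrow> nat \<Rightarrow> real" and r1 r2 r3 :: nat
    and gx gy gz :: "real \<Rightarrow> nat \<Rightarrow> real" and Xg Yg Zg :: "real set"
  defines "g \<equiv> (\<lambda>v1 v2 v3. mode_prod3 C r1 r2 r3 (gx v1) (gy v2) (gz v3))"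
  shows "fst (Frank g Xg Yg Zg) \<le> enat r1 \<and> fst (snd (Frank g Xg Yg Zg)) \<le> enat r2 \<and>
          snd (snd (Frank g Xg Yg Zg)) \<le> enat r3"
proof (intro conjI)
  show "fst (Frank g Xg Yg Zg) \<le> enat r1"
    unfolding Frank_def fst_conv
  proof (rule SUP_least, clarify)
    fix n1 n2 n3 T assume "(n1, n2, n3, T) \<in> sampled_tensors g Xg Yg Zg"
    then obtain x y z where T: "T = (\<lambda>i j k. g (x i) (y j) (z k))" unfolding sampled_tensors_def by auto
    have "vec_space.rank n1 (unfold1 n1 n2 n3 T) \<le> r1"
      unfolding unfold1_def
      by (rule vec_space.rank_sum_le[where u="\<lambda>i a. gx (x i) a"
          and k="\<lambda>c a. \<Sum>j<r2. \<Sum>k<r3. C a j k * gy (y (c mod n2)) j * gz (z (c div n2)) k"])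
         (simp add: T g_def mp_mode1)
    then show "enat (mrank (unfold1 n1 n2 n3 T)) \<le> enat r1" unfolding mrank_def unfold1_def by simp
  qed
  show "fst (snd (Frank g Xg Yg Zg)) \<le> enat r2"
    unfolding Frank_def fst_conv snd_conv
  proof (rule SUP_least, clarify)
    fix n1 n2 n3 T assume "(n1, n2, n3, T) \<in> sampled_tensors g Xg Yg Zg"
    then obtain x y z where T: "T = (\<lambda>i j k. g (x i) (y j) (z k))" unfolding sampled_tensors_def by auto
    have "vec_space.rank n2 (unfold2 n1 n2 n3 T) \<le> r2"
      unfolding unfold2_def
      by (rule vec_space.rank_sum_le[where u="\<lambda>j b. gy (y j) b"
          and k="\<lambda>c b. \<Sum>i<r1. \<Sum>k<r3. C i b k * gx (x (c mod n1)) i * gz (z (c div n1)) k"])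
         (simp add: T g_def mp_mode2)
    then show "enat (mrank (unfold2 n1 n2 n3 T)) \<le> enat r2" unfolding mrank_def unfold2_def by simp
  qed
  show "snd (snd (Frank g Xg Yg Zg)) \<le> enat r3"
    unfolding Frank_def snd_conv
  proof (rule SUP_least, clarify)
    fix n1 n2 n3 T assume "(n1, n2, n3, T) \<in> sampled_tensors g Xg Yg Zg"
    then obtain x y z where T: "T = (\<lambda>i j k. g (x i) (y j) (z k))" unfolding sampled_tensors_def by auto
    have "vec_space.rank n3 (unfold3 n1 n2 n3 T) \<le> r3"
      unfolding unfold3_def
      by (rule vec_space.rank_sum_le[where u="\<lambda>k c. gz (z k) c"
          and k="\<lambda>c' c. \<Sum>i<r1. \<Sum>j<r2. C i j c * gx (x (c' mod n1)) i * gy (y (c' div n1)) j"])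
         (simp add: T g_def mp_mode3)
    then show "enat (mrank (unfold3 n1 n2 n3 T)) \<le> enat r3" unfolding mrank_def unfold3_def by simp
  qed
qed

theorem theorem2:
  shows
  "(\<forall>(f :: real \<Rightarrow> real \<Rightarrow> real \<Rightarrow> real) Xf Yf Zf (r1::nat) (r2::nat) (r3::nat).
      bounded_fun3 f Xf Yf Zf \<longrightarrow> Frank f Xf Yf Zf = (enat r1, enat r2, enat r3) \<longrightarrow>
      (\<exists>C fx fy fz. bounded_vec_fun r1 Xf fx \<and> bounded_vec_fun r2 Yf fy \<and>
                    bounded_vec_fun r3 Zf fz \<and>
         (\<forall>v1\<in>Xf. \<forall>v2\<in>Yf. \<forall>v3\<in>Zf.
            f v1 v2 v3 = mode_prod3 C r1 r2 r3 (fx v1) (fy v2) (fz v3))))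
   \<and>
   (\<forall>(C :: nat \<Rightarrow> nat \<Rightarrow> nat \<Rightarrow> real) (r1::nat) (r2::nat) (r3::nat) Xg Yg Zg gx gy gz.
      bounded_vec_fun r1 Xg gx \<longrightarrow> bounded_vec_fun r2 Yg gy \<longrightarrow> bounded_vec_fun r3 Zg gz \<longrightarrow>
      (let g = (\<lambda>v1 v2 v3. mode_prod3 C r1 r2 r3 (gx v1) (gy v2) (gz v3))
       in fst (Frank g Xg Yg Zg) \<le> enat r1 \<and> fst (snd (Frank g Xg Yg Zg)) \<le> enat r2 \<and>
          snd (snd (Frank g Xg Yg Zg)) \<le> enat r3))"
proof (intro conjI allI impI)
  fix f :: "real \<Rightarrow> real \<Rightarrow> real \<Rightarrow> real" and Xf Yf Zf and r1 r2 r3 :: nat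
  assume "bounded_fun3 f Xf Yf Zf" "Frank f Xf Yf Zf = (enat r1, enat r2, enat r3)"
  then show "\<exists>C fx fy fz. bounded_vec_fun r1 Xf fx \<and> bounded_vec_fun r2 Yf fy \<and>
                    bounded_vec_fun r3 Zf fz \<and>
         (\<forall>v1\<in>Xf. \<forall>v2\<in>Yf. \<forall>v3\<in>Zf.
            f v1 v2 v3 = mode_prod3 C r1 r2 r3 (fx v1) (fy v2) (fz v3))" by (rule part1)
next
  fix C :: "nat \<Rightarrow> nat \<Rightarrow> nat \<Rightarrow> real" and r1 r2 r3 :: nat and Xg Yg Zg gx gy gz
  show "let g = (\<lambda>v1 v2 v3. mode_prod3 C r1 r2 r3 (gx v1) (gy v2) (gz v3))
       in fst (Frank g Xg Yg Zg) \<le> enat r1 \<and> fst (snd (Frank g Xg Yg Zg)) \<le> enat r2 \<and>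
          snd (snd (Frank g Xg Yg Zg)) \<le> enat r3"
    unfolding Let_def by (rule part2)
qed

end
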